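(* Let $f:D^n\to\mathbb{R}^d$ have finite global sensitivity $GS_f>0$ and suppose some $y\in D^n$ has $LS_f(y)=GS_f$. For $x\in D^n$ let $gd(x)=\min_{y:\,LS_f(y)=GS_f}d(y,x)$. Let $\beta>0$ satisfy $$\beta\le\min_{x:\,LS_f(x)\neq GS_f}\frac{1}{gd(x)}\ln\Big(\frac{GS_f}{LS_f(x)}\Big)$$ (with the convention $\ln(GS_f/0)=+\infty$). Then for all $x\in D^n$, $S^*_{f,\beta}(x)=GS_f\cdot e^{-\beta\cdot gd(x)}$.
   Context: $D^n$ denotes the set of datasets consisting of $n$ elements; Hamming distance $d(x,y)=|\{i:x_i\neq y_i\}|$. Global sensitivity: $GS_f=\max_{x,y:d(x,y)=1}\|f(x)-f(y)\|_1$. Local sensitivity: $LS_f(x)=\max_{y:d(x,y)=1}\|f(x)-f(y)\|_1$ (so $LS_f(x)\le GS_f$). For $\beta>0$, the $\beta$-smooth sensitivity of $f$ at $x$ is $S^*_{f,\beta}(x)=\max_{y\in D^n}\big(LS_f(y)\,e^{-\beta\, d(y,x)}\big)$. *)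

theory Defs
  imports Complex_Main
begin

text \<open>Datasets in D^n are lists of length n over the type 'a (the data universe D).
  Values f x lie in R^d, represented as functions 'd \<Rightarrow> real with finite index type 'd.\<close>

definition datasets :: "nat \<Rightarrow> 'a list set" where
  "datasets n = {x. length x = n}"

definition hamming :: "'a list \<Rightarrow> 'a list \<Rightarrow> nat" where
  "hamming x y = card {i. i < length x \<and> x ! i \<noteq> y ! i}"

definition l1_dist :: "('d::finite \<Rightarrow> real) \<Rightarrow> ('d \<Rightarrow> real) \<Rightarrow> real" where
  "l1_dist u v = (\<Sum>i\<in>UNIV. \<bar>u i - v i\<bar>)"

definition global_sens :: "('a list \<Rightarrow> 'd::finite \<Rightarrow> real) \<Rightarrow> nat \<Rightarrow> real" where
  "global_sens f n = (SUP p \<in> {(x, y). x \<in> datasets n \<and> y \<in> datasets n \<and> hamming x y = 1}.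
                        l1_dist (f (fst p)) (f (snd p)))"

definition local_sens :: "('a list \<Rightarrow> 'd::finite \<Rightarrow> real) \<Rightarrow> nat \<Rightarrow> 'a list \<Rightarrow> real" where
  "local_sens f n x = (SUP y \<in> {y. y \<in> datasets n \<and> hamming x y = 1}. l1_dist (f x) (f y))"

definition smooth_sens :: "('a list \<Rightarrow> 'd::finite \<Rightarrow> real) \<Rightarrow> nat \<Rightarrow> real \<Rightarrow> 'a list \<Rightarrow> real" where
  "smooth_sens f n \<beta> x = (SUP y \<in> datasets n. local_sens f n y * exp (- \<beta> * real (hamming y x)))"

definition gdist :: "('a list \<Rightarrow> 'd::finite \<Rightarrow> real) \<Rightarrow> nat \<Rightarrow> 'a list \<Rightarrow> nat" where
  "gdist f n x = (LEAST k. \<exists>y \<in> datasets n. local_sens f n y = global_sens f n \<and> hamming y x = k)"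

end

theory Submission
  imports Defs
begin

lemma hamming_sym: "length x = length y \<Longrightarrow> hamming x y = hamming y x"
  unfolding hamming_def by (metis (mono_tags, opaque_lifting))

lemma hamming_tri:
  assumes "length x = length y" "length y = length z"
  shows "hamming x z \<le> hamming x y + hamming y z"
proof -
  have "{i. i < length x \<and> x ! i \<noteq> z ! i} \<subseteq>
        {i. i < length x \<and> x ! i \<noteq> y ! i} \<union> {i. i < length y \<and> y ! i \<noteq> z ! i}"
    using assms by auto
  hence "card {i. i < length x \<and> x ! i \<noteq> z ! i} \<le>
        card ({i. i < length x \<and> x ! i \<noteq> y ! i} \<union> {i. i < length y \<and> y ! i \<noteq> z ! i})"
    by (intro card_mono) auto
  also have "\<dots> \<le> card {i. i < length x \<and> x ! i \<noteq> y ! i} + card {i. i < length y \<and> y ! i \<noteq> z ! i}"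
    by (rule card_Un_le)
  finally show ?thesis unfolding hamming_def .
qed

lemma hamming_zero:
  assumes "length x = length y" "hamming x y = 0" shows "x = y"
proof -
  have "{i. i < length x \<and> x ! i \<noteq> y ! i} = {}"
    using assms unfolding hamming_def by simp
  thus ?thesis using assms(1) by (metis (mono_tags, lifting) empty_Collect_eq nth_equalityI)
qed

lemma hamming_zero_len: "length x = 0 \<Longrightarrow> hamming x y = 0"
  unfolding hamming_def by simp

lemma neighbor_exists:
  fixes p q y :: "'a list"
  assumes "p \<in> datasets n" "q \<in> datasets n" "hamming p q = 1" "y \<in> datasets n"
  shows "\<exists>z. z \<in> datasets n \<and> hamming y z = 1"
proof -
  have "hamming p q \<noteq> 0" using assms by simp
  then obtain i where i: "i < length p" "p ! i \<noteq> q ! i"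
    unfolding hamming_def by (metis (mono_tags, lifting) Collect_empty_eq card.empty)
  have n: "n > 0" using i assms unfolding datasets_def by auto
  define c where "c = (if y ! 0 = p ! i then q ! i else p ! i)"
  have c: "c \<noteq> y ! 0" using i unfolding c_def by auto
  define z where "z = y[0 := c]"
  have ly: "length y = n" using assms unfolding datasets_def by auto
  have "{j. j < length y \<and> y ! j \<noteq> z ! j} = {0}"
    using c n ly unfolding z_def by (auto simp: nth_list_update)
  hence "hamming y z = 1" unfolding hamming_def by simp
  moreover have "z \<in> datasets n" using ly unfolding z_def datasets_def by simp
  ultimately show ?thesis by blast
qed

theorem theorem4:
  fixes f :: "'a list \<Rightarrow> 'd::finite \<Rightarrow> real" and n :: nat and \<beta> :: real
  assumes GS_finite: "bdd_above {l1_dist (f x) (f y) | x y.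
                         x \<in> datasets n \<and> y \<in> datasets n \<and> hamming x y = 1}"
    and GS_pos: "global_sens f n > 0"
    and attained: "\<exists>y \<in> datasets n. local_sens f n y = global_sens f n"
    and beta_pos: "\<beta> > 0"
    and beta_le: "\<forall>x \<in> datasets n. local_sens f n x \<noteq> global_sens f n \<longrightarrow>
                    local_sens f n x = 0 \<or>
                    \<beta> \<le> (1 / real (gdist f n x)) * ln (global_sens f n / local_sens f n x)"
  shows "\<forall>x \<in> datasets n. smooth_sens f n \<beta> x = global_sens f n * exp (- \<beta> * real (gdist f n x))"
proof
  define G where "G = global_sens f n"
  define P :: "('a list \<times> 'a list) set" where "P = {(x, y). x \<in> datasets n \<and> y \<in> datasets n \<and> hamming x y = 1}"
  have Geq: "G = (SUP p \<in> P. l1_dist (f (fst p)) (f (snd p)))"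
    unfolding G_def global_sens_def P_def by simp
  have imgeq: "(\<lambda>p. l1_dist (f (fst p)) (f (snd p))) ` P = {l1_dist (f x) (f y) | x y.
                         x \<in> datasets n \<and> y \<in> datasets n \<and> hamming x y = 1}"
    unfolding P_def by force
  have bdd: "bdd_above ((\<lambda>p. l1_dist (f (fst p)) (f (snd p))) ` P)"
    using GS_finite imgeq by simp
  have l1nn: "l1_dist u v \<ge> 0" for u v :: "'d \<Rightarrow> real"
    unfolding l1_dist_def by (simp add: sum_nonneg)
  have LS: "local_sens f n y \<le> G \<and> (local_sens f n y = G \<or> local_sens f n y \<ge> 0)"
    if y: "y \<in> datasets n" for y
  proof (cases "P = {}")
    case True
    hence "{z. z \<in> datasets n \<and> hamming y z = 1} = {}" using y unfolding P_def by auto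
    hence "local_sens f n y = Sup {}" unfolding local_sens_def by (metis image_empty)
    moreover have "G = Sup {}" unfolding Geq using True by (metis image_empty)
    ultimately show ?thesis by simp
  next
    case False
    then obtain p q :: "'a list" where pq: "p \<in> datasets n" "q \<in> datasets n" "hamming p q = 1"
      unfolding P_def by (auto simp del: One_nat_def)
    obtain z where z: "z \<in> datasets n" "hamming y z = 1"
      using neighbor_exists[OF pq y] by blast
    let ?N = "{z. z \<in> datasets n \<and> hamming y z = 1}"
    have each: "l1_dist (f y) (f w) \<le> G" if "w \<in> ?N" for w
    proof -
      have "(y, w) \<in> P" using that y unfolding P_def by auto
      from cSUP_upper[OF this bdd] show ?thesis unfolding Geq by simp
    qed
    have bddN: "bdd_above ((\<lambda>w. l1_dist (f y) (f w)) ` ?N)"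
      using each by (intro bdd_aboveI2) blast
    have ne: "?N \<noteq> {}" using z by auto
    have "local_sens f n y \<le> G" unfolding local_sens_def
      by (rule cSUP_least[OF ne]) (use each in auto)
    moreover have "l1_dist (f y) (f z) \<le> local_sens f n y" unfolding local_sens_def
      by (rule cSUP_upper[OF _ bddN]) (use z in auto)
    ultimately show ?thesis using l1nn[of "f y" "f z"] by linarith
  qed
  have gex: "\<exists>k. \<exists>y \<in> datasets n. local_sens f n y = G \<and> hamming y x = k" for x :: "'a list"
    using attained unfolding G_def by blast
  have gI: "\<exists>y \<in> datasets n. local_sens f n y = G \<and> hamming y x = gdist f n x" for x :: "'a list"
    unfolding gdist_def G_def using LeastI_ex[OF gex[of x, unfolded G_def]] .
  have gle: "gdist f n x \<le> hamming y x" if "y \<in> datasets n" "local_sens f n y = G" for x y :: "'a list"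
    unfolding gdist_def G_def by (rule Least_le) (use that G_def in blast)
  have gtri: "gdist f n x \<le> gdist f n y + hamming y x"
    if "x \<in> datasets n" "y \<in> datasets n" for x y :: "'a list"
  proof -
    obtain y' where y': "y' \<in> datasets n" "local_sens f n y' = G" "hamming y' y = gdist f n y"
      using gI[of y] by blast
    have "gdist f n x \<le> hamming y' x" by (rule gle[OF y'(1,2)])
    also have "\<dots> \<le> hamming y' y + hamming y x"
      by (rule hamming_tri) (use that y'(1) in \<open>auto simp: datasets_def\<close>)
    finally show ?thesis using y'(3) by simp
  qed
  fix x :: "'a list" assume x: "x \<in> datasets n"
  define F where "F = (\<lambda>y. local_sens f n y * exp (- \<beta> * real (hamming y x)))"
  have upper: "F y \<le> G * exp (- \<beta> * real (gdist f n x))" if y: "y \<in> datasets n" for y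
  proof (cases "local_sens f n y = G")
    case True
    have "gdist f n x \<le> hamming y x" by (rule gle[OF y True])
    hence "- \<beta> * real (hamming y x) \<le> - \<beta> * real (gdist f n x)" using beta_pos by simp
    thus ?thesis unfolding F_def True using GS_pos G_def by simp
  next
    case False
    have nn: "local_sens f n y \<ge> 0" using LS[OF y] False by blast
    have lt: "local_sens f n y < G" using LS[OF y] False by linarith
    show ?thesis
    proof (cases "local_sens f n y = 0")
      case True thus ?thesis unfolding F_def using GS_pos G_def by simp
    next
      case nz: False
      have pos: "local_sens f n y > 0" using nn nz by linarith
      have b: "\<beta> \<le> (1 / real (gdist f n y)) * ln (G / local_sens f n y)"
        using beta_le y False nz G_def by blast
      have g0: "gdist f n y \<noteq> 0"
      proof
        assume "gdist f n y = 0"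
        then obtain y' where "y' \<in> datasets n" "local_sens f n y' = G" "hamming y' y = 0"
          using gI[of y] by auto
        hence "y' = y" using hamming_zero[of y' y] y unfolding datasets_def by auto
        thus False using False \<open>local_sens f n y' = G\<close> by simp
      qed
      have "\<beta> * real (gdist f n y) \<le> ln (G / local_sens f n y)"
        using b g0 by (simp add: field_simps)
      hence "exp (\<beta> * real (gdist f n y)) \<le> G / local_sens f n y"
        using pos GS_pos G_def by (metis divide_pos_pos exp_le_cancel_iff exp_ln)
      hence A: "local_sens f n y * exp (\<beta> * real (gdist f n y)) \<le> G"
        using pos by (simp add: field_simps)
      have "real (gdist f n x) \<le> real (gdist f n y) + real (hamming y x)"
        using gtri[OF x y] by linarith
      hence "\<beta> * real (gdist f n x) \<le> \<beta> * (real (gdist f n y) + real (hamming y x))"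
        using beta_pos by (intro mult_left_mono) auto
      hence "- \<beta> * real (hamming y x) \<le> \<beta> * real (gdist f n y) - \<beta> * real (gdist f n x)"
        by (simp add: algebra_simps)
      hence "exp (- \<beta> * real (hamming y x)) \<le> exp (\<beta> * real (gdist f n y)) * exp (- \<beta> * real (gdist f n x))"
        by (simp add: exp_add[symmetric])
      hence "F y \<le> local_sens f n y * (exp (\<beta> * real (gdist f n y)) * exp (- \<beta> * real (gdist f n x)))"
        unfolding F_def using pos by (simp add: mult_left_mono)
      also have "\<dots> = (local_sens f n y * exp (\<beta> * real (gdist f n y))) * exp (- \<beta> * real (gdist f n x))"
        by simp
      also have "\<dots> \<le> G * exp (- \<beta> * real (gdist f n x))"
        using A by (simp add: mult_right_mono)
      finally show ?thesis .
    qed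
  qed
  obtain y0 where y0: "y0 \<in> datasets n" "local_sens f n y0 = G" "hamming y0 x = gdist f n x"
    using gI[of x] by blast
  have "F y0 = G * exp (- \<beta> * real (gdist f n x))" unfolding F_def using y0 by simp
  hence "Sup (F ` datasets n) = G * exp (- \<beta> * real (gdist f n x))"
    using y0(1) upper by (intro cSup_eq_maximum) (metis image_eqI, blast)
  thus "smooth_sens f n \<beta> x = global_sens f n * exp (- \<beta> * real (gdist f n x))"
    unfolding smooth_sens_def F_def G_def by simp
qed

end
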